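(* Let $X$ be an infinite dimensional real Banach space and let $E \subset X^\ast$ be a weak$^\ast$-closed and bounded set having no vector of maximum length, i.e. there is no $e\in E$ with $\|e\|=\sup\{\|e'\|: e'\in E\}$. Then the weak$^\ast$-closed convex hull $K$ of $E$ has no vector of maximum length, i.e. there is no $k\in K$ with $\|k\|=\sup\{\|k'\|:k'\in K\}$. Equivalently: if $E$ is not remotal from a point $x^\ast\in X^\ast$, then neither is $K$.
   Context: For a bounded set $E$ in a Banach space $Z$ and $z\in Z$, let $D(z,E)=\sup\{\|z-e\|: e\in E\}$. $E$ is called remotal from $z$ if there exists $e_0\in E$ with $\|z-e_0\|=D(z,E)$ (such $e_0$ is a farthest point of $E$ from $z$); $E$ is remotal if it is remotal from every point of $Z$. The weak$^\ast$-closed convex hull of $E\subset X^\ast$ is the closure of the convex hull of $E$ in the weak$^\ast$ topology $\sigma(X^\ast,X)$. *)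

theory Defs
  imports "HOL-Analysis.Analysis"
begin

text \<open>The weak-star topology
  sigma(X*, X) is the initial topology induced by the evaluation maps, i.e. the
  pullback of the product (pointwise) topology on X \<Rightarrow> real along
  blinfun_apply.\<close>

definition weak_star_topology :: "('a::real_normed_vector \<Rightarrow>\<^sub>L real) topology" where
  "weak_star_topology =
     topology (\<lambda>U. \<exists>V::('a \<Rightarrow> real) set. open V \<and> U = blinfun_apply -` V)"

definition weak_star_closed_convex_hull ::
  "('a::real_normed_vector \<Rightarrow>\<^sub>L real) set \<Rightarrow> ('a \<Rightarrow>\<^sub>L real) set" where
  "weak_star_closed_convex_hull E = weak_star_topology closure_of (convex hull E)"

definition has_max_length_vector :: "'b::real_normed_vector set \<Rightarrow> bool" where
  "has_max_length_vector S \<longleftrightarrow> (\<exists>e\<in>S. norm e = (SUP e'\<in>S. norm e'))"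

end

theory Submission
  imports Defs
begin

lemma ws_istop: "istopology (\<lambda>U. \<exists>V::('a::real_normed_vector \<Rightarrow> real) set. open V \<and> U = blinfun_apply -` V)"
  (is "istopology ?L")
  unfolding istopology_def
proof (intro conjI allI impI)
  fix S T :: "('a::real_normed_vector \<Rightarrow>\<^sub>L real) set"
  assume "?L S" "?L T"
  then obtain V W where "open V" "S = blinfun_apply -` V" "open W" "T = blinfun_apply -` W" by blast
  then show "?L (S \<inter> T)" by (intro exI[of _ "V \<inter> W"]) auto
next
  fix K :: "('a::real_normed_vector \<Rightarrow>\<^sub>L real) set set"
  assume H: "\<forall>U\<in>K. ?L U"
  define g where "g U = (SOME V::('a \<Rightarrow> real) set. open V \<and> U = blinfun_apply -` V)" for U
  have g: "open (g U) \<and> U = blinfun_apply -` (g U)" if "U \<in> K" for U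
    unfolding g_def using H that by (metis (mono_tags, lifting) someI_ex)
  show "?L (\<Union>K)"
  proof (intro exI[of _ "\<Union>(g ` K)"] conjI)
    show "open (\<Union>(g ` K))" using g by blast
    show "\<Union>K = blinfun_apply -` \<Union>(g ` K)"
    proof
      show "\<Union>K \<subseteq> blinfun_apply -` \<Union>(g ` K)" using g by blast
      show "blinfun_apply -` \<Union>(g ` K) \<subseteq> \<Union>K" using g by blast
    qed
  qed
qed

lemma ws_openin: "openin weak_star_topology U \<longleftrightarrow> (\<exists>V. open V \<and> U = blinfun_apply -` V)"
  unfolding weak_star_topology_def by (subst topology_inverse'[OF ws_istop]) (rule refl)

lemma ws_topspace: "topspace weak_star_topology = UNIV"
  unfolding topspace_def using ws_openin[of UNIV] by auto

lemma ws_closedin: "closedin weak_star_topology E \<Longrightarrow> \<exists>C. closed C \<and> E = blinfun_apply -` C"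
  unfolding closedin_def ws_topspace ws_openin
proof (elim conjE exE)
  fix V assume "open V" "UNIV - E = blinfun_apply -` V"
  then show ?thesis by (intro exI[of _ "- V"]) (auto simp: closed_def)
qed

lemma ws_halfspace: "closedin weak_star_topology {h. blinfun_apply h y \<le> c}"
proof -
  have "open {g::'a\<Rightarrow>real. c < g y}"
    by (rule open_Collect_less) (auto intro: continuous_intros)
  moreover have "UNIV - {h. blinfun_apply h y \<le> c} = blinfun_apply -` {g. c < g y}" by auto
  ultimately show ?thesis unfolding closedin_def ws_topspace ws_openin by blast
qed

lemma ws_compact_seq:
  fixes E :: "('a::real_normed_vector \<Rightarrow>\<^sub>L real) set"
    and y :: "nat \<Rightarrow> 'a" and c :: "nat \<Rightarrow> real"
  assumes cl: "closedin weak_star_topology E"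
    and R: "\<And>e. e \<in> E \<Longrightarrow> norm e \<le> R"
    and fin: "\<And>J. \<exists>e\<in>E. \<forall>j\<le>J. c j \<le> blinfun_apply e (y j)"
  shows "\<exists>e\<in>E. \<forall>j. c j \<le> blinfun_apply e (y j)"
proof -
  obtain C where C: "closed C" "E = blinfun_apply -` C" using ws_closedin[OF cl] by blast
  define S where "S = PiE UNIV (\<lambda>x::'a. {-R * norm x .. R * norm x})"
  have "compactin (product_topology (\<lambda>i. euclidean) UNIV) S"
    unfolding S_def compactin_PiE by auto
  then have cS: "compact S" by (simp add: euclidean_product_topology)
  define A where "A = C \<inter> {g::'a\<Rightarrow>real. \<forall>x. \<forall>z. g (x + z) = g x + g z}
       \<inter> {g. \<forall>a. \<forall>x. g (a *\<^sub>R x) = a * g x}"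
  define G where "G j = {g::'a\<Rightarrow>real. c j \<le> g (y j)}" for j
  have clA: "closed A"
    unfolding A_def
    by (intro closed_Int C(1) closed_Collect_all closed_Collect_eq continuous_on_add
        continuous_on_mult continuous_on_const continuous_on_product_coordinates)
  have clG: "closed (G j)" for j
    unfolding G_def by (intro closed_Collect_le continuous_on_const continuous_on_product_coordinates)
  have "S \<inter> \<Inter>(insert A (range G)) \<noteq> {}"
  proof (rule compact_imp_fip[OF cS])
    show "closed T" if "T \<in> insert A (range G)" for T using that clA clG by auto
    fix F' assume F': "finite F'" "F' \<subseteq> insert A (range G)"
    have f1: "finite (F' - {A})" using F'(1) by blast
    have f2: "F' - {A} \<subseteq> G ` UNIV" using F'(2) by blast
    obtain I where I: "finite I" "F' - {A} = G ` I"
      using finite_subset_image[OF f1 f2] by (elim exE conjE) (rule that)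
    obtain J where J: "I \<subseteq> {..J}" using finite_nat_iff_bounded_le[THEN iffD1, OF I(1)] by (elim exE) (rule that)
    obtain e where e: "e \<in> E" "\<forall>j\<le>J. c j \<le> blinfun_apply e (y j)" using fin by blast
    have inS: "blinfun_apply e \<in> S"
    proof -
      have "\<bar>blinfun_apply e x\<bar> \<le> R * norm x" for x
      proof -
        have "\<bar>blinfun_apply e x\<bar> \<le> norm e * norm x"
          using norm_blinfun[of e x] by simp
        also have "\<dots> \<le> R * norm x" using R[OF e(1)] by (simp add: mult_right_mono)
        finally show ?thesis .
      qed
      then show ?thesis unfolding S_def by (auto simp: PiE_def abs_le_iff minus_le_iff)
    qed
    have inA: "blinfun_apply e \<in> A"
      using e(1) C(2) unfolding A_def by (auto simp: blinfun.add_right blinfun.scaleR_right)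
    have inG: "blinfun_apply e \<in> G j" if "j \<in> I" for j
      using e(2) J that unfolding G_def by auto
    have "blinfun_apply e \<in> \<Inter>F'"
    proof
      fix T assume "T \<in> F'"
      then show "blinfun_apply e \<in> T"
        using inA inG I(2) by (cases "T = A") auto
    qed
    with inS show "S \<inter> \<Inter>F' \<noteq> {}" by blast
  qed
  then obtain g where g: "g \<in> S" "g \<in> A" "\<And>j. g \<in> G j" by blast
  have bl: "bounded_linear g"
  proof (rule bounded_linear_intro[where K = R])
    show "g (x + z) = g x + g z" for x z using g(2) unfolding A_def by auto
    show "g (r *\<^sub>R x) = r *\<^sub>R g x" for r x using g(2) unfolding A_def by auto
    show "norm (g x) \<le> norm x * R" for x
    proof -
      have "g x \<in> {-R * norm x .. R * norm x}" using g(1) unfolding S_def by (auto simp: PiE_def Pi_def)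
      then show ?thesis by (auto simp: abs_le_iff mult.commute)
    qed
  qed
  define e where "e = Blinfun g"
  have ea: "blinfun_apply e = g" unfolding e_def using bounded_linear_Blinfun_apply[OF bl] .
  have "e \<in> E" using C(2) ea g(2) unfolding A_def by auto
  moreover have "\<forall>j. c j \<le> blinfun_apply e (y j)" using g(3) ea unfolding G_def by auto
  ultimately show ?thesis by blast
qed

lemma blinfun_near_norm:
  fixes k :: "'a::real_normed_vector \<Rightarrow>\<^sub>L real"
  assumes "\<epsilon> > 0"
  shows "\<exists>y. norm y \<le> 1 \<and> norm k - \<epsilon> < blinfun_apply k y"
proof (rule ccontr)
  assume "\<not> ?thesis"
  then have H: "\<And>y. norm y \<le> 1 \<Longrightarrow> blinfun_apply k y \<le> norm k - \<epsilon>" by (auto simp: not_less)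
  have nn: "0 \<le> norm k - \<epsilon>" using H[of 0] by simp
  have "norm (blinfun_apply k y) \<le> (norm k - \<epsilon>) * norm y" for y
  proof (cases "y = 0")
    case True then show ?thesis by simp
  next
    case False
    define u where "u = (1 / norm y) *\<^sub>R y"
    have nu: "norm u \<le> 1" "norm (-u) \<le> 1" using False unfolding u_def by simp_all
    have ku: "blinfun_apply k u = blinfun_apply k y / norm y"
      unfolding u_def by (simp add: blinfun.scaleR_right)
    have "blinfun_apply k u \<le> norm k - \<epsilon>" "- blinfun_apply k u \<le> norm k - \<epsilon>"
      using H[OF nu(1)] H[OF nu(2)] by (simp_all add: blinfun.minus_right)
    then have "\<bar>blinfun_apply k y\<bar> / norm y \<le> norm k - \<epsilon>" using ku by simp
    then show ?thesis using False by (simp add: divide_le_eq)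
  qed
  then have "norm k \<le> norm k - \<epsilon>" by (rule norm_blinfun_bound[OF nn])
  with assms show False by simp
qed

lemma geom_half: "(\<Sum>j\<le>J. (1/2::real)^j) = 2 - (1/2)^J"
  by (induction J) (simp_all add: field_simps)

theorem theorem1:
  fixes E :: "('a::banach \<Rightarrow>\<^sub>L real) set"
  assumes inf_dim: "\<not> (\<exists>B::'a set. finite B \<and> span B = UNIV)"
    and wclosed: "closedin weak_star_topology E"
    and bdd: "bounded E"
    and nomax: "\<not> has_max_length_vector E"
  shows "\<not> has_max_length_vector (weak_star_closed_convex_hull E)"
proof
  define K where "K = weak_star_closed_convex_hull E"
  assume "has_max_length_vector (weak_star_closed_convex_hull E)"
  then obtain k where kK: "k \<in> K" and nk: "norm k = (SUP k'\<in>K. norm k')"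
    unfolding has_max_length_vector_def K_def by blast
  obtain R where R: "\<And>e. e \<in> E \<Longrightarrow> norm e \<le> R" using bdd unfolding bounded_iff by blast
  have Ene: "E \<noteq> {}"
  proof
    assume "E = {}"
    then have "K = {}" unfolding K_def weak_star_closed_convex_hull_def by simp
    with kK show False by simp
  qed
  have bddy: "bdd_above ((\<lambda>e. blinfun_apply e y) ` E)" for y
  proof (rule bdd_aboveI2)
    fix e assume "e \<in> E"
    have "blinfun_apply e y \<le> norm e * norm y"
      using norm_blinfun[of e y] by simp
    also have "\<dots> \<le> R * norm y" using R[OF \<open>e \<in> E\<close>] by (simp add: mult_right_mono)
    finally show "blinfun_apply e y \<le> R * norm y" .
  qed
  have bddN: "bdd_above (norm ` E)" by (rule bdd_aboveI2) (rule R)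
  define r where "r = (SUP e\<in>E. norm e)"
  have ler: "norm e \<le> r" if "e \<in> E" for e unfolding r_def using bddN that by (rule cSUP_upper2) simp
  have half: "blinfun_apply h y \<le> (SUP e\<in>E. blinfun_apply e y)" if "h \<in> K" for h y
  proof -
    define H where "H = {h. blinfun_apply h y \<le> (SUP e\<in>E. blinfun_apply e y)}"
    have "E \<subseteq> H" unfolding H_def by (auto intro: cSUP_upper[OF _ bddy])
    moreover have "convex H" unfolding H_def convex_def
    proof (intro allI impI ballI)
      fix a b :: "'a \<Rightarrow>\<^sub>L real" and u v :: real
      let ?c = "(SUP e\<in>E. blinfun_apply e y)"
      assume a: "a \<in> {h. blinfun_apply h y \<le> ?c}" and b: "b \<in> {h. blinfun_apply h y \<le> ?c}"
        and uv: "0 \<le> u" "0 \<le> v" "u + v = 1"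
      have "u * blinfun_apply a y + v * blinfun_apply b y \<le> u * ?c + v * ?c"
        using a b uv by (intro add_mono mult_left_mono) auto
      also have "\<dots> = ?c" using uv by (simp add: distrib_right[symmetric])
      finally show "u *\<^sub>R a + v *\<^sub>R b \<in> {h. blinfun_apply h y \<le> ?c}"
        by (simp add: blinfun.add_left blinfun.scaleR_left)
    qed
    ultimately have "convex hull E \<subseteq> H" by (rule hull_minimal)
    then have "K \<subseteq> H" unfolding K_def weak_star_closed_convex_hull_def H_def
      by (rule closure_of_minimal) (rule ws_halfspace)
    with that show ?thesis unfolding H_def by blast
  qed
  have supr: "(SUP e\<in>E. blinfun_apply e y) \<le> r * norm y" for y
  proof (rule cSUP_least[OF Ene])
    fix e assume "e \<in> E"
    have "blinfun_apply e y \<le> norm e * norm y" using norm_blinfun[of e y] by simp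
    also have "\<dots> \<le> r * norm y" using ler[OF \<open>e \<in> E\<close>] by (simp add: mult_right_mono)
    finally show "blinfun_apply e y \<le> r * norm y" .
  qed
  have r0: "0 \<le> r"
  proof -
    obtain e where "e \<in> E" using Ene by blast
    then show ?thesis using ler[of e] norm_ge_zero[of e] by linarith
  qed
  have normK: "norm h \<le> r" if "h \<in> K" for h
  proof (rule norm_blinfun_bound[OF r0])
    fix y
    have "blinfun_apply h y \<le> r * norm y" using half[OF that, of y] supr[of y] by simp
    moreover have "blinfun_apply h (-y) \<le> r * norm (-y)" using half[OF that, of "-y"] supr[of "-y"] by simp
    ultimately show "norm (blinfun_apply h y) \<le> r * norm y" by (simp add: blinfun.minus_right abs_le_iff)
  qed
  have EK: "E \<subseteq> K" unfolding K_def weak_star_closed_convex_hull_def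
    by (rule order_trans[OF hull_subset closure_of_subset]) (simp add: ws_topspace)
  have "r \<le> (SUP k'\<in>K. norm k')" unfolding r_def
  proof (rule cSUP_subset_mono[OF Ene _ EK])
    show "bdd_above (norm ` K)" by (rule bdd_aboveI2) (rule normK)
  qed simp
  then have nkr: "norm k = r" using nk normK[OF kK] by simp
  have lt: "norm e < r" if "e \<in> E" for e
  proof -
    have "norm e \<noteq> r" using nomax that unfolding has_max_length_vector_def r_def by blast
    then show ?thesis using ler[OF that] by simp
  qed
  have "\<forall>j. \<exists>y. norm y \<le> 1 \<and> norm k - (1/4)^j < blinfun_apply k y"
    by (intro allI blinfun_near_norm) simp
  then obtain yy where yy: "\<And>j. norm (yy j) \<le> 1" "\<And>j. r - (1/4)^j < blinfun_apply k (yy j)"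
    unfolding nkr by (metis (no_types))
  have fin: "\<exists>e\<in>E. \<forall>j\<le>J. r - 3 * (1/2)^j \<le> blinfun_apply e (yy j)" for J
  proof -
    define z where "z = (\<Sum>j\<le>J. (2::real)^j *\<^sub>R yy j)"
    have "blinfun_apply k z - 1 < (SUP e\<in>E. blinfun_apply e z)" using half[OF kK, of z] by simp
    then obtain e where eE: "e \<in> E" and ez: "blinfun_apply k z - 1 < blinfun_apply e z"
      using less_cSUP_iff[OF Ene bddy] by blast
    have kz: "blinfun_apply k z = (\<Sum>j\<le>J. 2^j * blinfun_apply k (yy j))"
      unfolding z_def by (simp add: blinfun.sum_right blinfun.scaleR_right)
    have ez': "blinfun_apply e z = (\<Sum>j\<le>J. 2^j * blinfun_apply e (yy j))"
      unfolding z_def by (simp add: blinfun.sum_right blinfun.scaleR_right)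
    define d where "d j = 2^j * (r - blinfun_apply e (yy j))" for j
    have dnn: "0 \<le> d j" for j
    proof -
      have "blinfun_apply e (yy j) \<le> norm e * norm (yy j)" using norm_blinfun[of e "yy j"] by simp
      also have "\<dots> \<le> norm e" using yy(1)[of j] by (simp add: mult_left_le)
      finally show ?thesis unfolding d_def using lt[OF eE] by simp
    qed
    have t1: "2^j * (r - blinfun_apply k (yy j)) \<le> (1/2::real)^j" for j
    proof -
      have "(2::real)^j * (1/4)^j = (1/2)^j" by (simp add: power_mult_distrib[symmetric])
      moreover have "2^j * (r - blinfun_apply k (yy j)) \<le> (2::real)^j * (1/4)^j"
        using yy(2)[of j] by (intro mult_left_mono) auto
      ultimately show ?thesis by simp
    qed
    have "(\<Sum>j\<le>J. d j) = (\<Sum>j\<le>J. 2^j * r) - blinfun_apply e z"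
      unfolding d_def ez' by (simp add: right_diff_distrib sum_subtractf)
    also have "\<dots> < (\<Sum>j\<le>J. 2^j * r) - blinfun_apply k z + 1" using ez by simp
    also have "\<dots> = (\<Sum>j\<le>J. 2^j * (r - blinfun_apply k (yy j))) + 1"
      unfolding kz by (simp add: right_diff_distrib sum_subtractf)
    also have "\<dots> \<le> (\<Sum>j\<le>J. (1/2::real)^j) + 1" using t1 by (simp add: sum_mono)
    also have "\<dots> \<le> 3" unfolding geom_half by simp
    finally have sd: "(\<Sum>j\<le>J. d j) < 3" .
    have "r - 3 * (1/2)^j \<le> blinfun_apply e (yy j)" if "j \<le> J" for j
    proof -
      have "d j \<le> (\<Sum>j\<le>J. d j)" using that dnn by (intro member_le_sum) auto
      with sd have "2^j * (r - blinfun_apply e (yy j)) \<le> 3" unfolding d_def by simp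
      then have "r - blinfun_apply e (yy j) \<le> 3 / 2^j" by (simp add: le_divide_eq mult.commute)
      then show ?thesis by (simp add: power_divide)
    qed
    with eE show ?thesis by blast
  qed
  obtain g where gE: "g \<in> E" and gy: "\<And>j. r - 3 * (1/2)^j \<le> blinfun_apply g (yy j)"
    using ws_compact_seq[OF wclosed R fin] by blast
  have pos: "0 < (r - norm g) / 3" using lt[OF gE] by simp
  obtain j where j: "(1/2::real)^j < (r - norm g) / 3" using real_arch_pow_inv[OF pos, of "1/2"] by (auto simp del: divide_const_simps)
  have "blinfun_apply g (yy j) \<le> norm g * norm (yy j)" using norm_blinfun[of g "yy j"] by simp
  also have "\<dots> \<le> norm g" using yy(1)[of j] by (simp add: mult_left_le)
  finally have "r - 3 * (1/2)^j \<le> norm g" using gy[of j] by linarith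
  with j show False by simp
qed

end
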